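(* Let $G=(V,E)$ be an undirected graph and $\mu$ an orientation of its edges. Let $\mathcal D$ be an AD paths decomposition of $(G,\mu)$ with degree at most 1. Coloring each path in $\mathcal D$ using two alternating colors yields an oriented degree-splitting $(E_1,E_2)$ of $(G,\mu)$ with discrepancy at most 1.
   Context: A path here is a trail $P=(v_0,e_1,v_1,\dots,e_k,v_k)$ (a walk with pairwise distinct edges, vertices may repeat; if $v_0=v_k$ it is called a cycle). $P$ is an alternating-directions (AD) path if for every $1\le i<k$, the edges $e_i,e_{i+1}$ are either both oriented (under $\mu$) towards $v_i$ or both oriented away from $v_i$. $v_0$ is an incoming endpoint of $P$ if $e_1$ is oriented towards $v_0$, and an outgoing endpoint otherwise; symmetrically $v_k$ is an incoming endpoint if $e_k$ is oriented towards $v_k$, and an outgoing endpoint otherwise. An AD paths decomposition of $(G,\mu)$ with degree at most $\kappa$ is a partition of $E$ into edge-disjoint AD paths such that each vertex is an incoming endpoint of at most $\kappa$ of these paths and an outgoing endpoint of at most $\kappa$ of these paths. Coloring a path with two alternating colors means consecutive edges $e_i,e_{i+1}$ of the path receive opposite colors (one of two colors). An oriented degree-splitting with discrepancy $\kappa$ is a partition $(E_1,E_2)$ of $E$ such that for every vertex $v$, the numbers of incoming edges at $v$ in $E_1$ and in $E_2$ differ by at most $\kappa$, and the numbers of outgoing edges at $v$ in $E_1$ and in $E_2$ differ by at most $\kappa$. *)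

theory Defs
  imports Main
begin

text \<open>An undirected graph G = (V,E) together with an orientation mu is represented by
  an edge set E of abstract edges and two functions tail, head giving, for each edge,
  the endpoint it is oriented away from (tail) and towards (head) under mu.\<close>

definition oriented_graph :: "'v set \<Rightarrow> 'e set \<Rightarrow> ('e \<Rightarrow> 'v) \<Rightarrow> ('e \<Rightarrow> 'v) \<Rightarrow> bool" where
  "oriented_graph V E tail head \<longleftrightarrow> finite V \<and> finite E \<and>
     (\<forall>e\<in>E. tail e \<in> V \<and> head e \<in> V \<and> tail e \<noteq> head e) \<and>
     inj_on (\<lambda>e. {tail e, head e}) E"

text \<open>A trail P = (v0, e1, v1, ..., ek, vk): vertex list vs (length k+1), edge list es
  (length k), pairwise distinct edges, e_(i+1) joins v_i and v_(i+1).\<close>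

definition trail :: "'e set \<Rightarrow> ('e \<Rightarrow> 'v) \<Rightarrow> ('e \<Rightarrow> 'v) \<Rightarrow> 'v list \<times> 'e list \<Rightarrow> bool" where
  "trail E tail head P \<longleftrightarrow> (case P of (vs, es) \<Rightarrow>
     length vs = length es + 1 \<and> distinct es \<and> set es \<subseteq> E \<and>
     (\<forall>i<length es. {tail (es ! i), head (es ! i)} = {vs ! i, vs ! Suc i}))"

definition ad_path :: "'e set \<Rightarrow> ('e \<Rightarrow> 'v) \<Rightarrow> ('e \<Rightarrow> 'v) \<Rightarrow> 'v list \<times> 'e list \<Rightarrow> bool" where
  "ad_path E tail head P \<longleftrightarrow> trail E tail head P \<and> (case P of (vs, es) \<Rightarrow>
     es \<noteq> [] \<and>
     (\<forall>i. 0 < i \<and> i < length es \<longrightarrow>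
        (head (es ! (i - 1)) = vs ! i \<and> head (es ! i) = vs ! i) \<or>
        (tail (es ! (i - 1)) = vs ! i \<and> tail (es ! i) = vs ! i)))"

definition incoming_endpoint :: "('e \<Rightarrow> 'v) \<Rightarrow> 'v \<Rightarrow> 'v list \<times> 'e list \<Rightarrow> bool" where
  "incoming_endpoint head v P \<longleftrightarrow> (case P of (vs, es) \<Rightarrow>
     (v = vs ! 0 \<and> head (es ! 0) = v) \<or> (v = last vs \<and> head (last es) = v))"

definition outgoing_endpoint :: "('e \<Rightarrow> 'v) \<Rightarrow> 'v \<Rightarrow> 'v list \<times> 'e list \<Rightarrow> bool" where
  "outgoing_endpoint head v P \<longleftrightarrow> (case P of (vs, es) \<Rightarrow>
     (v = vs ! 0 \<and> head (es ! 0) \<noteq> v) \<or> (v = last vs \<and> head (last es) \<noteq> v))"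

definition ad_decomposition ::
  "'v set \<Rightarrow> 'e set \<Rightarrow> ('e \<Rightarrow> 'v) \<Rightarrow> ('e \<Rightarrow> 'v) \<Rightarrow> ('v list \<times> 'e list) set \<Rightarrow> nat \<Rightarrow> bool" where
  "ad_decomposition V E tail head D \<kappa> \<longleftrightarrow>
     finite D \<and>
     (\<forall>P\<in>D. ad_path E tail head P) \<and>
     (\<forall>P\<in>D. \<forall>Q\<in>D. P \<noteq> Q \<longrightarrow> set (snd P) \<inter> set (snd Q) = {}) \<and>
     (\<Union>P\<in>D. set (snd P)) = E \<and>
     (\<forall>v\<in>V. card {P\<in>D. incoming_endpoint head v P} \<le> \<kappa> \<and>
             card {P\<in>D. outgoing_endpoint head v P} \<le> \<kappa>)"

definition alternating_colouring :: "('v list \<times> 'e list) set \<Rightarrow> ('e \<Rightarrow> bool) \<Rightarrow> bool" where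
  "alternating_colouring D c \<longleftrightarrow>
     (\<forall>P\<in>D. \<forall>i. Suc i < length (snd P) \<longrightarrow> c (snd P ! i) \<noteq> c (snd P ! Suc i))"

definition oriented_degree_splitting ::
  "'v set \<Rightarrow> 'e set \<Rightarrow> ('e \<Rightarrow> 'v) \<Rightarrow> ('e \<Rightarrow> 'v) \<Rightarrow> 'e set \<Rightarrow> 'e set \<Rightarrow> nat \<Rightarrow> bool" where
  "oriented_degree_splitting V E tail head E1 E2 \<kappa> \<longleftrightarrow>
     E1 \<union> E2 = E \<and> E1 \<inter> E2 = {} \<and>
     (\<forall>v\<in>V.
        \<bar>int (card {e\<in>E1. head e = v}) - int (card {e\<in>E2. head e = v})\<bar> \<le> int \<kappa> \<and>
        \<bar>int (card {e\<in>E1. tail e = v}) - int (card {e\<in>E2. tail e = v})\<bar> \<le> int \<kappa>)"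

end

theory Submission
  imports Defs
begin

definition sgnc :: "('e \<Rightarrow> bool) \<Rightarrow> 'e \<Rightarrow> int" where
  "sgnc c e = (if c e then 1 else -1)"

lemma path_sum:
  fixes vs :: "'v list" and es :: "'e list" and hd tl :: "'e \<Rightarrow> 'v" and c :: "'e \<Rightarrow> bool"
  assumes len: "length vs = length es + 1" and ne: "es \<noteq> []"
  and ends: "\<forall>i<length es. {tl(es!i), hd(es!i)} = {vs!i, vs!Suc i}"
  and neq: "\<forall>i<length es. tl(es!i) \<noteq> hd(es!i)"
  and ad: "\<forall>i. 0<i \<and> i<length es \<longrightarrow> (hd(es!(i-1)) = vs!i \<and> hd(es!i)=vs!i) \<or> (tl(es!(i-1)) = vs!i \<and> tl(es!i) = vs!i)"
  and alt: "\<forall>i. Suc i < length es \<longrightarrow> c(es!i) \<noteq> c(es!Suc i)"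
  shows "\<bar>\<Sum>j<length es. if hd (es!j) = v then sgnc c (es!j) else 0\<bar> \<le> 1 \<and>
     ((\<Sum>j<length es. if hd (es!j) = v then sgnc c (es!j) else 0) \<noteq> 0 \<longrightarrow>
       (v = vs!0 \<and> hd(es!0) = v) \<or> (v = last vs \<and> hd(last es) = v))"
proof -
  define k where "k = length es"
  define F where "F j \<longleftrightarrow> hd(es!j) = vs!(Suc j)" for j
  have L1: "hd(es!j) = vs!j \<or> hd(es!j) = vs!Suc j" "vs!j \<noteq> vs!Suc j" if "j<k" for j
    using ends[rule_format, of j] neq[rule_format, of j] that unfolding k_def
    by (auto simp: doubleton_eq_iff)
  have L2: "F (Suc j) \<longleftrightarrow> \<not> F j" if "Suc j < k" for j
  proof -
    have a: "(hd(es!j) = vs!Suc j \<and> hd(es!Suc j)=vs!Suc j) \<or> (tl(es!j) = vs!Suc j \<and> tl(es!Suc j) = vs!Suc j)"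
      using ad[rule_format, of "Suc j"] that k_def by auto
    have b: "{tl(es!j), hd(es!j)} = {vs!j, vs!Suc j}" "{tl(es!Suc j), hd(es!Suc j)} = {vs!Suc j, vs!Suc (Suc j)}"
      using ends that k_def by auto
    have n: "tl(es!j) \<noteq> hd(es!j)" "tl(es!Suc j) \<noteq> hd(es!Suc j)" using neq that k_def by auto
    have d: "vs!j \<noteq> vs!Suc j" "vs!Suc j \<noteq> vs!Suc (Suc j)" using L1(2) that by auto
    show ?thesis unfolding F_def using a b n d by (auto simp: doubleton_eq_iff)
  qed
  have L3: "j < k \<longrightarrow> (F j \<longleftrightarrow> (F 0 \<noteq> odd j)) \<and> (c(es!j) \<longleftrightarrow> (c(es!0) \<noteq> odd j))" for j
  proof (induction j)
    case 0 then show ?case by simp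
  next
    case (Suc j)
    show ?case
    proof
      assume "Suc j < k"
      then have "F (Suc j) \<longleftrightarrow> \<not> F j" "c(es!Suc j) \<noteq> c(es!j)" using L2 alt k_def by auto
      with Suc \<open>Suc j < k\<close> show "(F (Suc j) \<longleftrightarrow> (F 0 \<noteq> odd (Suc j))) \<and> (c(es!Suc j) \<longleftrightarrow> (c(es!0) \<noteq> odd (Suc j)))"
        by auto
    qed
  qed
  define S where "S n = (\<Sum>j<n. if hd (es!j) = v then sgnc c (es!j) else 0)" for n
  define A where "A n = (if \<not> F 0 \<and> vs!0 = v then sgnc c (es!0) else 0) +
      (if F (n-1) \<and> vs!n = v then sgnc c (es!(n-1)) else 0)" for n
  have L4: "1 \<le> n \<longrightarrow> n \<le> k \<longrightarrow> S n = A n" for n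
  proof (induction n)
    case 0 then show ?case by simp
  next
    case (Suc n)
    show ?case
    proof (intro impI)
      assume h: "1 \<le> Suc n" "Suc n \<le> k"
      show "S (Suc n) = A (Suc n)"
      proof (cases "n = 0")
        case True
        have S1: "S (Suc 0) = (if hd (es!0) = v then sgnc c (es!0) else 0)" unfolding S_def by simp
        have A1: "A (Suc 0) = (if \<not> F 0 \<and> vs!0 = v then sgnc c (es!0) else 0) +
           (if F 0 \<and> vs!Suc 0 = v then sgnc c (es!0) else 0)" unfolding A_def by simp
        show ?thesis
        proof (cases "F 0")
          case True
          then have "hd (es!0) = vs!Suc 0" by (simp add: F_def)
          then show ?thesis using S1 A1 True \<open>n = 0\<close> by simp
        next
          case False
          then have "hd (es!0) = vs!0" using L1[of 0] h by (auto simp: F_def)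
          then show ?thesis using S1 A1 False \<open>n = 0\<close> by simp
        qed
      next
        case False
        then have IH: "S n = A n" using Suc h by auto
        have Sn: "S (Suc n) = S n + (if hd (es!n) = v then sgnc c (es!n) else 0)"
          unfolding S_def by simp
        obtain m where m: "n = Suc m" using False by (cases n) auto
        have FF: "F n \<longleftrightarrow> \<not> F m" using L2[of m] m h by auto
        have cc: "c (es!n) \<noteq> c (es!m)" using alt m h k_def by auto
        show ?thesis
        proof (cases "F m")
          case True
          then have "hd (es!n) = vs!n" using FF L1[of n] h by (auto simp: F_def)
          have An: "A n = (if \<not> F 0 \<and> vs!0 = v then sgnc c (es!0) else 0) +
              (if vs!n = v then sgnc c (es!m) else 0)" using True m unfolding A_def by simp
          have An1: "A (Suc n) = (if \<not> F 0 \<and> vs!0 = v then sgnc c (es!0) else 0)"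
            using True FF unfolding A_def by simp
          have "sgnc c (es!n) = - sgnc c (es!m)" using cc by (simp add: sgnc_def)
          then show ?thesis using IH Sn An An1 \<open>hd (es!n) = vs!n\<close> by simp
        next
          case f: False
          then have "hd (es!n) = vs!Suc n" using FF by (auto simp: F_def)
          have An: "A n = (if \<not> F 0 \<and> vs!0 = v then sgnc c (es!0) else 0)"
            using f m unfolding A_def by simp
          have An1: "A (Suc n) = (if \<not> F 0 \<and> vs!0 = v then sgnc c (es!0) else 0) +
              (if vs!Suc n = v then sgnc c (es!n) else 0)"
            using f FF unfolding A_def by simp
          show ?thesis using IH Sn An An1 \<open>hd (es!n) = vs!Suc n\<close> by simp
        qed
      qed
    qed
  qed
  have k1: "1 \<le> k" using ne k_def by (cases es) auto
  have SA: "S k = A k" using L4 k1 by auto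
  have lastes: "last es = es!(k-1)" using ne k_def by (simp add: last_conv_nth)
  have "vs \<noteq> []" using len by auto
  then have lastvs: "last vs = vs!k" using len k_def by (simp add: last_conv_nth)
  have hd0: "\<not> F 0 \<Longrightarrow> hd (es!0) = vs!0" using L1[of 0] k1 by (auto simp: F_def)
  have hdk: "F (k-1) \<Longrightarrow> hd (es!(k-1)) = vs!k" using k1 by (auto simp: F_def)
  have par: "\<not> F 0 \<Longrightarrow> F (k-1) \<Longrightarrow> c (es!(k-1)) \<noteq> c (es!0)"
    using L3[of "k-1"] k1 by auto
  have "\<bar>A k\<bar> \<le> 1"
    using par unfolding A_def sgnc_def by auto
  moreover have "A k \<noteq> 0 \<longrightarrow> (v = vs!0 \<and> hd(es!0) = v) \<or> (v = last vs \<and> hd(last es) = v)"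
    using hd0 hdk lastes lastvs unfolding A_def by auto
  ultimately show ?thesis using SA unfolding S_def k_def by simp
qed

definition pathok :: "('e \<Rightarrow> 'v) \<Rightarrow> ('e \<Rightarrow> 'v) \<Rightarrow> ('e \<Rightarrow> bool) \<Rightarrow> 'v list \<Rightarrow> 'e list \<Rightarrow> bool" where
  "pathok ta hh c vs es \<longleftrightarrow> length vs = length es + 1 \<and> es \<noteq> [] \<and>
     (\<forall>i<length es. {ta(es!i), hh(es!i)} = {vs!i, vs!Suc i}) \<and>
     (\<forall>i<length es. ta(es!i) \<noteq> hh(es!i)) \<and>
     (\<forall>i. 0<i \<and> i<length es \<longrightarrow> (hh(es!(i-1)) = vs!i \<and> hh(es!i)=vs!i) \<or> (ta(es!(i-1)) = vs!i \<and> ta(es!i) = vs!i)) \<and>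
     (\<forall>i. Suc i < length es \<longrightarrow> c(es!i) \<noteq> c(es!Suc i))"

lemma pathok_swap: "pathok ta hh c vs es \<Longrightarrow> pathok hh ta c vs es"
proof -
  assume a: "pathok ta hh c vs es"
  have 1: "\<forall>i<length es. {hh(es!i), ta(es!i)} = {vs!i, vs!Suc i}"
    using a unfolding pathok_def by (simp add: insert_commute)
  have 2: "\<forall>i<length es. hh(es!i) \<noteq> ta(es!i)"
    using a unfolding pathok_def by metis
  have 3: "\<forall>i. 0<i \<and> i<length es \<longrightarrow> (ta(es!(i-1)) = vs!i \<and> ta(es!i)=vs!i) \<or> (hh(es!(i-1)) = vs!i \<and> hh(es!i) = vs!i)"
    using a unfolding pathok_def by blast
  show ?thesis using a 1 2 3 unfolding pathok_def by blast
qed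

lemma path_sum':
  assumes "pathok ta hh c vs es"
  shows "\<bar>\<Sum>j<length es. if hh (es!j) = v then sgnc c (es!j) else 0\<bar> \<le> 1 \<and>
     ((\<Sum>j<length es. if hh (es!j) = v then sgnc c (es!j) else 0) \<noteq> 0 \<longrightarrow>
       (v = vs!0 \<and> hh(es!0) = v) \<or> (v = last vs \<and> hh(last es) = v))"
  using assms unfolding pathok_def by (elim conjE) (rule path_sum[of vs es ta hh c v]; assumption)

lemma card_ind:
  assumes "finite E"
  shows "int (card {e\<in>E. P e}) = (\<Sum>e\<in>E. if P e then 1 else 0)"
  using sum.inter_filter[OF assms, of "\<lambda>_. (1::int)" P] by simp

lemma card_diff_sum:
  assumes "finite E"
  shows "int (card {e\<in>{e\<in>E. c e}. h e = v}) - int (card {e\<in>{e\<in>E. \<not> c e}. h e = v})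
     = (\<Sum>e\<in>E. if h e = v then sgnc c e else 0)"
proof -
  have 1: "int (card {e\<in>{e\<in>E. c e}. h e = v}) = (\<Sum>e\<in>E. if c e \<and> h e = v then 1 else 0)"
  proof -
    have "{e\<in>{e\<in>E. c e}. h e = v} = {e\<in>E. c e \<and> h e = v}" by blast
    then show ?thesis using card_ind[OF assms, of "\<lambda>e. c e \<and> h e = v"] by simp
  qed
  have 2: "int (card {e\<in>{e\<in>E. \<not> c e}. h e = v}) = (\<Sum>e\<in>E. if \<not> c e \<and> h e = v then 1 else 0)"
  proof -
    have "{e\<in>{e\<in>E. \<not> c e}. h e = v} = {e\<in>E. \<not> c e \<and> h e = v}" by blast
    then show ?thesis using card_ind[OF assms, of "\<lambda>e. \<not> c e \<and> h e = v"] by simp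
  qed
  show ?thesis unfolding 1 2 sum_subtractf[symmetric]
    by (rule sum.cong) (auto simp: sgnc_def)
qed

lemma sum_paths:
  assumes "finite D" "\<forall>P\<in>D. \<forall>Q\<in>D. P \<noteq> Q \<longrightarrow> set (snd P) \<inter> set (snd Q) = {}"
    "(\<Union>P\<in>D. set (snd P)) = E" "\<forall>P\<in>D. distinct (snd P)"
  shows "(\<Sum>e\<in>E. g e) = (\<Sum>P\<in>D. \<Sum>j<length (snd P). g (snd P ! j))"
proof -
  have "(\<Sum>e\<in>E. g e) = (\<Sum>P\<in>D. \<Sum>e\<in>set (snd P). g e)"
    unfolding assms(3)[symmetric] using assms(1,2) by (intro sum.UNION_disjoint) auto
  also have "\<dots> = (\<Sum>P\<in>D. \<Sum>j<length (snd P). g (snd P ! j))"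
  proof (rule sum.cong)
    fix P assume "P \<in> D"
    then have d: "distinct (snd P)" using assms(4) by auto
    show "(\<Sum>e\<in>set (snd P). g e) = (\<Sum>j<length (snd P). g (snd P ! j))"
      using d by (simp add: sum.distinct_set_conv_list sum_list_sum_nth lessThan_atLeast0)
  qed simp
  finally show ?thesis .
qed

lemma bound_sum:
  fixes T :: "'p \<Rightarrow> int"
  assumes "finite D" "card {P\<in>D. Q P} \<le> 1" "\<forall>P\<in>D. \<bar>T P\<bar> \<le> 1 \<and> (T P \<noteq> 0 \<longrightarrow> Q P)"
  shows "\<bar>\<Sum>P\<in>D. T P\<bar> \<le> 1"
proof -
  let ?I = "{P\<in>D. Q P}"
  have "(\<Sum>P\<in>D. T P) = (\<Sum>P\<in>?I. T P)"
    using assms by (intro sum.mono_neutral_right[of D ?I T]) auto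
  moreover have fi: "finite ?I" using assms(1) by auto
  moreover have "\<forall>a\<in>?I. \<forall>b\<in>?I. a = b" using assms(2) card_le_Suc0_iff_eq[OF fi] by simp
  ultimately show ?thesis
  proof (cases "?I = {}")
    case False
    then obtain a where "a \<in> ?I" by blast
    then have "?I = {a}" using \<open>\<forall>a\<in>?I. \<forall>b\<in>?I. a = b\<close> by blast
    then show ?thesis using \<open>(\<Sum>P\<in>D. T P) = (\<Sum>P\<in>?I. T P)\<close> assms(3) \<open>a \<in> ?I\<close> by auto
  qed simp
qed

theorem theorem4p5:
  fixes V :: "'v set" and E :: "'e set" and tail head :: "'e \<Rightarrow> 'v"
    and D :: "('v list \<times> 'e list) set" and c :: "'e \<Rightarrow> bool"
  assumes "oriented_graph V E tail head"
    and "ad_decomposition V E tail head D 1"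
    and "alternating_colouring D c"
  shows "oriented_degree_splitting V E tail head {e\<in>E. c e} {e\<in>E. \<not> c e} 1"
proof -
  have fE: "finite E" and nq: "\<forall>e\<in>E. tail e \<noteq> head e" using assms(1) unfolding oriented_graph_def by auto
  have fD: "finite D" and adp: "\<forall>P\<in>D. ad_path E tail head P"
    and disj: "\<forall>P\<in>D. \<forall>Q\<in>D. P \<noteq> Q \<longrightarrow> set (snd P) \<inter> set (snd Q) = {}"
    and un: "(\<Union>P\<in>D. set (snd P)) = E"
    and deg: "\<forall>v\<in>V. card {P\<in>D. incoming_endpoint head v P} \<le> 1 \<and>
             card {P\<in>D. outgoing_endpoint head v P} \<le> 1"
    using assms(2) unfolding ad_decomposition_def by auto
  have dist: "\<forall>P\<in>D. distinct (snd P)" using adp unfolding ad_path_def trail_def by auto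
  have P_facts: "length vs = length es + 1 \<and> es \<noteq> [] \<and>
     (\<forall>i<length es. {tail(es!i), head(es!i)} = {vs!i, vs!Suc i}) \<and>
     (\<forall>i<length es. tail(es!i) \<noteq> head(es!i)) \<and>
     (\<forall>i. 0<i \<and> i<length es \<longrightarrow> (head(es!(i-1)) = vs!i \<and> head(es!i)=vs!i) \<or> (tail(es!(i-1)) = vs!i \<and> tail(es!i) = vs!i)) \<and>
     (\<forall>i. Suc i < length es \<longrightarrow> c(es!i) \<noteq> c(es!Suc i))"
    if "(vs, es) \<in> D" for vs es
  proof -
    have a: "ad_path E tail head (vs, es)" using adp that by auto
    have "set es \<subseteq> E" using a unfolding ad_path_def trail_def by auto
    then have "\<forall>i<length es. tail(es!i) \<noteq> head(es!i)" using nq nth_mem by blast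
    moreover have "\<forall>i. Suc i < length es \<longrightarrow> c(es!i) \<noteq> c(es!Suc i)"
      using assms(3) that unfolding alternating_colouring_def by fastforce
    ultimately show ?thesis using a unfolding ad_path_def trail_def by auto
  qed
  have headb: "\<bar>\<Sum>P\<in>D. \<Sum>j<length (snd P). (\<lambda>e. if head e = v then sgnc c e else 0) (snd P ! j)\<bar> \<le> 1"
    if "v \<in> V" for v
  proof (rule bound_sum[OF fD, where Q = "incoming_endpoint head v"])
    show "card {P \<in> D. incoming_endpoint head v P} \<le> 1" using deg that by auto
    show "\<forall>P\<in>D. \<bar>\<Sum>j<length (snd P). (\<lambda>e. if head e = v then sgnc c e else 0) (snd P ! j)\<bar> \<le> 1 \<and>
      ((\<Sum>j<length (snd P). (\<lambda>e. if head e = v then sgnc c e else 0) (snd P ! j)) \<noteq> 0 \<longrightarrow>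
        incoming_endpoint head v P)"
    proof
      fix P assume "P \<in> D"
      obtain vs es where P: "P = (vs, es)" by (cases P)
      then have f: "(vs, es) \<in> D" using \<open>P \<in> D\<close> by simp
      show "\<bar>\<Sum>j<length (snd P). (\<lambda>e. if head e = v then sgnc c e else 0) (snd P ! j)\<bar> \<le> 1 \<and>
      ((\<Sum>j<length (snd P). (\<lambda>e. if head e = v then sgnc c e else 0) (snd P ! j)) \<noteq> 0 \<longrightarrow>
        incoming_endpoint head v P)"
      proof -
        note F = P_facts[OF f]
        have ps: "\<bar>\<Sum>j<length es. if head (es!j) = v then sgnc c (es!j) else 0\<bar> \<le> 1 \<and>
          ((\<Sum>j<length es. if head (es!j) = v then sgnc c (es!j) else 0) \<noteq> 0 \<longrightarrow>
          (v = vs!0 \<and> head(es!0) = v) \<or> (v = last vs \<and> head(last es) = v))"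
          by (rule path_sum'[of tail head c vs es v]) (unfold pathok_def, rule F)
        show ?thesis using ps unfolding P incoming_endpoint_def snd_conv prod.case by simp
      qed
    qed
  qed
  have tailb: "\<bar>\<Sum>P\<in>D. \<Sum>j<length (snd P). (\<lambda>e. if tail e = v then sgnc c e else 0) (snd P ! j)\<bar> \<le> 1"
    if "v \<in> V" for v
  proof (rule bound_sum[OF fD, where Q = "outgoing_endpoint head v"])
    show "card {P \<in> D. outgoing_endpoint head v P} \<le> 1" using deg that by auto
    show "\<forall>P\<in>D. \<bar>\<Sum>j<length (snd P). (\<lambda>e. if tail e = v then sgnc c e else 0) (snd P ! j)\<bar> \<le> 1 \<and>
      ((\<Sum>j<length (snd P). (\<lambda>e. if tail e = v then sgnc c e else 0) (snd P ! j)) \<noteq> 0 \<longrightarrow>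
        outgoing_endpoint head v P)"
    proof
      fix P assume "P \<in> D"
      obtain vs es where P: "P = (vs, es)" by (cases P)
      then have f: "(vs, es) \<in> D" using \<open>P \<in> D\<close> by simp
      have pk0: "pathok tail head c vs es" unfolding pathok_def by (rule P_facts[OF f])
      have pk: "pathok head tail c vs es" by (rule pathok_swap[OF pk0])
      have ne: "es \<noteq> []" and nqa: "\<forall>i<length es. head(es!i) \<noteq> tail(es!i)"
        using pk unfolding pathok_def by blast+
      have l0: "0 < length es" using ne by simp
      have n0: "tail (es!0) \<noteq> head (es!0)" using nqa l0 by metis
      have "last es = es ! (length es - 1)" using ne by (rule last_conv_nth)
      then have nl: "tail (last es) \<noteq> head (last es)" using nqa l0 by (metis diff_less zero_less_one)
      have ps: "\<bar>\<Sum>j<length es. if tail (es!j) = v then sgnc c (es!j) else 0\<bar> \<le> 1 \<and>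
       ((\<Sum>j<length es. if tail (es!j) = v then sgnc c (es!j) else 0) \<noteq> 0 \<longrightarrow>
       (v = vs!0 \<and> tail(es!0) = v) \<or> (v = last vs \<and> tail(last es) = v))"
        by (rule path_sum'[OF pk])
      show "\<bar>\<Sum>j<length (snd P). (\<lambda>e. if tail e = v then sgnc c e else 0) (snd P ! j)\<bar> \<le> 1 \<and>
      ((\<Sum>j<length (snd P). (\<lambda>e. if tail e = v then sgnc c e else 0) (snd P ! j)) \<noteq> 0 \<longrightarrow>
        outgoing_endpoint head v P)"
        using ps n0 nl unfolding P outgoing_endpoint_def snd_conv prod.case by auto
    qed
  qed
  show ?thesis unfolding oriented_degree_splitting_def
  proof (intro conjI ballI)
    fix v assume v: "v \<in> V"
    show "\<bar>int (card {e\<in>{e\<in>E. c e}. head e = v}) - int (card {e\<in>{e\<in>E. \<not> c e}. head e = v})\<bar> \<le> int 1"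
      unfolding card_diff_sum[OF fE] sum_paths[OF fD disj un dist] using headb[OF v] by simp
    show "\<bar>int (card {e\<in>{e\<in>E. c e}. tail e = v}) - int (card {e\<in>{e\<in>E. \<not> c e}. tail e = v})\<bar> \<le> int 1"
      unfolding card_diff_sum[OF fE] sum_paths[OF fD disj un dist] using tailb[OF v] by simp
  qed auto
qed

end
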